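(* Let three binary classifiers $i,j,k$ label a test with $Q_a,Q_b\ge1$, and let $\alpha x^2-\alpha x+\gamma$ be the prevalence quadratic built from their observed decision frequencies (as in the context). If the classifiers are error independent on the test and this quadratic is not identically zero, then both of its roots are rational numbers (indeed they are $p_a$ and $p_b$). Equivalently, if the prevalence quadratic is not identically zero and has an irrational (or non-real) root, then at least one pair or 3-way error correlation $\Gamma_{c,d;\ell}$ or $\Gamma_{i,j,k;\ell}$ is nonzero.
   Context: Test of $Q$ items with true labels $t_q\in\{a,b\}$; $Q_\ell=\#\{q:t_q=\ell\}$, $p_\ell=Q_\ell/Q$. Classifier $c\in\{i,j,k\}$ labels item $q$ with $\ell^q_c\in\{a,b\}$; label accuracy $p_{c,\ell}=\frac1{Q_\ell}\#\{q:\ell^q_c=\ell,t_q=\ell\}$. $f_{\ell_i\ell_j\ell_k}=\frac1Q\#\{q:\ell^q_i=\ell_i,\ell^q_j=\ell_j,\ell^q_k=\ell_k\}$. Define $f_{b_i}=f_{baa}+f_{bab}+f_{bba}+f_{bbb}$, $f_{b_j}=f_{aba}+f_{abb}+f_{bba}+f_{bbb}$, $f_{b_k}=f_{aab}+f_{abb}+f_{bab}+f_{bbb}$, $\Delta_{i,j}=f_{bba}+f_{bbb}-f_{b_i}f_{b_j}$, $\Delta_{i,k}=f_{bab}+f_{bbb}-f_{b_i}f_{b_k}$, $\Delta_{j,k}=f_{abb}+f_{bbb}-f_{b_j}f_{b_k}$, $\Delta_{i,j,k}=f_{bbb}-(f_{b_i}f_{b_j}f_{b_k}+f_{b_i}\Delta_{j,k}+f_{b_j}\Delta_{i,k}+f_{b_k}\Delta_{i,j})$,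 $\alpha=\Delta_{i,j,k}^2+4\Delta_{i,j}\Delta_{i,k}\Delta_{j,k}$, $\gamma=\Delta_{i,j}\Delta_{i,k}\Delta_{j,k}$. Pair error correlation $\Gamma_{c,d;\ell}=\frac1{Q_\ell}\sum_q(\mathbf 1[\ell^q_c=\ell]-p_{c,\ell})(\mathbf 1[\ell^q_d=\ell]-p_{d,\ell})\mathbf 1[t_q=\ell]$; 3-way error correlation $\Gamma_{i,j,k;\ell}=\frac1{Q_\ell}\sum_q\prod_{c\in\{i,j,k\}}(\mathbf 1[\ell^q_c=\ell]-p_{c,\ell})\,\mathbf 1[t_q=\ell]$. Error independence means all pair and 3-way correlations vanish for both labels $\ell\in\{a,b\}$. *)

theory Defs
  imports Complex_Main
begin

datatype lbl = La | Lb
datatype clf = Ci | Cj | Ck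

text \<open>A test of Q items indexed by 0..Q-1; t q is the true label of item q;
  L c q is the label classifier c assigns to item q.\<close>

definition ind :: "bool \<Rightarrow> real" where
  "ind b = (if b then 1 else 0)"

definition Qcnt :: "nat \<Rightarrow> (nat \<Rightarrow> lbl) \<Rightarrow> lbl \<Rightarrow> nat" where
  "Qcnt Q t l = card {q. q < Q \<and> t q = l}"

definition prev :: "nat \<Rightarrow> (nat \<Rightarrow> lbl) \<Rightarrow> lbl \<Rightarrow> real" where
  "prev Q t l = real (Qcnt Q t l) / real Q"

definition acc :: "nat \<Rightarrow> (nat \<Rightarrow> lbl) \<Rightarrow> (clf \<Rightarrow> nat \<Rightarrow> lbl) \<Rightarrow> clf \<Rightarrow> lbl \<Rightarrow> real" where
  "acc Q t L c l = real (card {q. q < Q \<and> L c q = l \<and> t q = l}) / real (Qcnt Q t l)"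

definition freq :: "nat \<Rightarrow> (clf \<Rightarrow> nat \<Rightarrow> lbl) \<Rightarrow> lbl \<Rightarrow> lbl \<Rightarrow> lbl \<Rightarrow> real" where
  "freq Q L x y z = real (card {q. q < Q \<and> L Ci q = x \<and> L Cj q = y \<and> L Ck q = z}) / real Q"

definition Gamma2 :: "nat \<Rightarrow> (nat \<Rightarrow> lbl) \<Rightarrow> (clf \<Rightarrow> nat \<Rightarrow> lbl) \<Rightarrow> clf \<Rightarrow> clf \<Rightarrow> lbl \<Rightarrow> real" where
  "Gamma2 Q t L c d l = (1 / real (Qcnt Q t l)) *
     (\<Sum>q<Q. (ind (L c q = l) - acc Q t L c l) * (ind (L d q = l) - acc Q t L d l) * ind (t q = l))"

definition Gamma3 :: "nat \<Rightarrow> (nat \<Rightarrow> lbl) \<Rightarrow> (clf \<Rightarrow> nat \<Rightarrow> lbl) \<Rightarrow> lbl \<Rightarrow> real" where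
  "Gamma3 Q t L l = (1 / real (Qcnt Q t l)) *
     (\<Sum>q<Q. (ind (L Ci q = l) - acc Q t L Ci l) * (ind (L Cj q = l) - acc Q t L Cj l)
            * (ind (L Ck q = l) - acc Q t L Ck l) * ind (t q = l))"

definition error_independent :: "nat \<Rightarrow> (nat \<Rightarrow> lbl) \<Rightarrow> (clf \<Rightarrow> nat \<Rightarrow> lbl) \<Rightarrow> bool" where
  "error_independent Q t L \<longleftrightarrow>
     (\<forall>l c d. c \<noteq> d \<longrightarrow> Gamma2 Q t L c d l = 0) \<and> (\<forall>l. Gamma3 Q t L l = 0)"

definition fbi :: "nat \<Rightarrow> (clf \<Rightarrow> nat \<Rightarrow> lbl) \<Rightarrow> real" where
  "fbi Q L = freq Q L Lb La La + freq Q L Lb La Lb + freq Q L Lb Lb La + freq Q L Lb Lb Lb"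
definition fbj :: "nat \<Rightarrow> (clf \<Rightarrow> nat \<Rightarrow> lbl) \<Rightarrow> real" where
  "fbj Q L = freq Q L La Lb La + freq Q L La Lb Lb + freq Q L Lb Lb La + freq Q L Lb Lb Lb"
definition fbk :: "nat \<Rightarrow> (clf \<Rightarrow> nat \<Rightarrow> lbl) \<Rightarrow> real" where
  "fbk Q L = freq Q L La La Lb + freq Q L La Lb Lb + freq Q L Lb La Lb + freq Q L Lb Lb Lb"

definition Dij :: "nat \<Rightarrow> (clf \<Rightarrow> nat \<Rightarrow> lbl) \<Rightarrow> real" where
  "Dij Q L = freq Q L Lb Lb La + freq Q L Lb Lb Lb - fbi Q L * fbj Q L"
definition Dik :: "nat \<Rightarrow> (clf \<Rightarrow> nat \<Rightarrow> lbl) \<Rightarrow> real" where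
  "Dik Q L = freq Q L Lb La Lb + freq Q L Lb Lb Lb - fbi Q L * fbk Q L"
definition Djk :: "nat \<Rightarrow> (clf \<Rightarrow> nat \<Rightarrow> lbl) \<Rightarrow> real" where
  "Djk Q L = freq Q L La Lb Lb + freq Q L Lb Lb Lb - fbj Q L * fbk Q L"
definition Dijk :: "nat \<Rightarrow> (clf \<Rightarrow> nat \<Rightarrow> lbl) \<Rightarrow> real" where
  "Dijk Q L = freq Q L Lb Lb Lb - (fbi Q L * fbj Q L * fbk Q L + fbi Q L * Djk Q L
      + fbj Q L * Dik Q L + fbk Q L * Dij Q L)"

definition alpha :: "nat \<Rightarrow> (clf \<Rightarrow> nat \<Rightarrow> lbl) \<Rightarrow> real" where
  "alpha Q L = (Dijk Q L)^2 + 4 * Dij Q L * Dik Q L * Djk Q L"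
definition gamma :: "nat \<Rightarrow> (clf \<Rightarrow> nat \<Rightarrow> lbl) \<Rightarrow> real" where
  "gamma Q L = Dij Q L * Dik Q L * Djk Q L"

end

theory Submission
  imports Defs
begin
lemma alg:
  fixes p r ui uj uk vi vj vk fi fj fk dij dik djk dijk :: real
  assumes pr: "p + r = 1"
   and fi: "fi = p*ui + r*vi" and fj: "fj = p*uj + r*vj" and fk: "fk = p*uk + r*vk"
   and dij: "dij = p*ui*uj + r*vi*vj - fi*fj" and dik: "dik = p*ui*uk + r*vi*vk - fi*fk"
   and djk: "djk = p*uj*uk + r*vj*vk - fj*fk"
   and dijk: "dijk = (p*ui*uj*uk + r*vi*vj*vk) - (fi*fj*fk + fi*djk + fj*dik + fk*dij)"
  shows "dij*dik*djk = p*r*(dijk^2 + 4*dij*dik*djk)"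
proof -
  have p: "p = 1 - r" using pr by simp
  have a: "dij = r*(1-r)*(vi-ui)*(vj-uj)" unfolding dij fi fj p by algebra
  have b: "dik = r*(1-r)*(vi-ui)*(vk-uk)" unfolding dik fi fk p by algebra
  have c: "djk = r*(1-r)*(vj-uj)*(vk-uk)" unfolding djk fj fk p by algebra
  have d: "dijk = r*(1-r)*(1-2*r)*((vi-ui)*(vj-uj)*(vk-uk))"
    unfolding dijk a b c unfolding fi fj fk p by algebra
  show ?thesis unfolding a b c d p by algebra
qed

lemma card_ind: "real (card {q::nat. q < Q \<and> P q}) = (\<Sum>q<Q. ind (P q))"
proof -
  have "(\<Sum>q<Q. ind (P q)) = (\<Sum>q\<in>{q\<in>{..<Q}. P q}. 1)"
    by (subst sum.inter_filter) (simp_all add: ind_def)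
  also have "{q\<in>{..<Q}. P q} = {q. q<Q \<and> P q}" by auto
  finally show ?thesis by simp
qed
lemma pair_sum:
  fixes x y w :: "nat \<Rightarrow> real"
  assumes "(\<Sum>q<Q. (x q - a)*(y q - b)*w q) = 0" "(\<Sum>q<Q. x q*w q) = N*a" "(\<Sum>q<Q. y q*w q) = N*b" "(\<Sum>q<Q. w q) = N"
  shows "(\<Sum>q<Q. x q*y q*w q) = N*a*b"
proof -
  have "(\<Sum>q<Q. (x q - a)*(y q - b)*w q) = (\<Sum>q<Q. x q*y q*w q - a*(y q*w q) - b*(x q*w q) + a*b*w q)"
    by (rule sum.cong) (auto simp: algebra_simps)
  also have "\<dots> = (\<Sum>q<Q. x q*y q*w q) - a*(\<Sum>q<Q. y q*w q) - b*(\<Sum>q<Q. x q*w q) + a*b*(\<Sum>q<Q. w q)"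
    by (simp add: sum.distrib sum_subtractf sum_distrib_left)
  finally show ?thesis using assms by (simp add: algebra_simps)
qed

lemma triple_sum:
  fixes x y z w :: "nat \<Rightarrow> real"
  assumes "(\<Sum>q<Q. (x q - a)*(y q - b)*(z q - c)*w q) = 0"
    "(\<Sum>q<Q. x q*w q) = N*a" "(\<Sum>q<Q. y q*w q) = N*b" "(\<Sum>q<Q. z q*w q) = N*c" "(\<Sum>q<Q. w q) = N"
    "(\<Sum>q<Q. x q*y q*w q) = N*a*b" "(\<Sum>q<Q. x q*z q*w q) = N*a*c" "(\<Sum>q<Q. y q*z q*w q) = N*b*c"
  shows "(\<Sum>q<Q. x q*y q*z q*w q) = N*a*b*c"
proof -
  have "(\<Sum>q<Q. (x q - a)*(y q - b)*(z q - c)*w q) = (\<Sum>q<Q. x q*y q*z q*w q - a*(y q*z q*w q) - b*(x q*z q*w q)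
     - c*(x q*y q*w q) + a*b*(z q*w q) + a*c*(y q*w q) + b*c*(x q*w q) - a*b*c*w q)"
    by (rule sum.cong) (auto simp: algebra_simps)
  also have "\<dots> = (\<Sum>q<Q. x q*y q*z q*w q) - a*(\<Sum>q<Q. y q*z q*w q) - b*(\<Sum>q<Q. x q*z q*w q)
     - c*(\<Sum>q<Q. x q*y q*w q) + a*b*(\<Sum>q<Q. z q*w q) + a*c*(\<Sum>q<Q. y q*w q) + b*c*(\<Sum>q<Q. x q*w q) - a*b*c*(\<Sum>q<Q. w q)"
    by (simp add: sum.distrib sum_subtractf sum_distrib_left)
  finally show ?thesis using assms by (simp add: algebra_simps)
qed

theorem theorem3:
  fixes Q :: nat and t :: "nat \<Rightarrow> lbl" and L :: "clf \<Rightarrow> nat \<Rightarrow> lbl"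
  assumes "Qcnt Q t La \<ge> 1" and "Qcnt Q t Lb \<ge> 1"
    and "error_independent Q t L"
    and "alpha Q L \<noteq> 0 \<or> gamma Q L \<noteq> 0"
  shows "\<forall>z::complex. of_real (alpha Q L) * z^2 - of_real (alpha Q L) * z + of_real (gamma Q L) = 0
           \<longrightarrow> z \<in> \<rat>"
proof -
  define X where "X = (\<lambda>c q. ind (L c q = Lb))"
  define W where "W = (\<lambda>l q. ind (t q = l))"
  define Na where "Na = real (Qcnt Q t La)"
  define Nb where "Nb = real (Qcnt Q t Lb)"
  have Na_pos: "Na > 0" and Nb_pos: "Nb > 0" using assms(1,2) by (auto simp: Na_def Nb_def)
  have sWa: "(\<Sum>q<Q. W La q) = Na" unfolding W_def Na_def Qcnt_def by (simp add: card_ind)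
  have sWb: "(\<Sum>q<Q. W Lb q) = Nb" unfolding W_def Nb_def Qcnt_def by (simp add: card_ind)
  have WW: "\<And>q. W La q + W Lb q = 1" by (case_tac "t q") (auto simp: W_def ind_def)
  have split: "\<And>g. (\<Sum>q<Q. g q) = (\<Sum>q<Q. g q * W La q) + (\<Sum>q<Q. g q * W Lb q)"
  proof -
    fix g :: "nat \<Rightarrow> real"
    have "(\<Sum>q<Q. g q) = (\<Sum>q<Q. g q * W La q + g q * W Lb q)"
      by (rule sum.cong) (simp_all add: distrib_left[symmetric] WW)
    then show "(\<Sum>q<Q. g q) = (\<Sum>q<Q. g q * W La q) + (\<Sum>q<Q. g q * W Lb q)" by (simp add: sum.distrib)
  qed
  have QN: "real Q = Na + Nb" using split[of "\<lambda>q. 1"] sWa sWb by simp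
  have Qpos: "real Q > 0" using QN Na_pos Nb_pos by simp
  define u where "u = (\<lambda>c. (\<Sum>q<Q. X c q * W La q) / Na)"
  define v where "v = (\<lambda>c. (\<Sum>q<Q. X c q * W Lb q) / Nb)"
  have su: "\<And>c. (\<Sum>q<Q. X c q * W La q) = Na * u c" using Na_pos by (simp add: u_def)
  have sv: "\<And>c. (\<Sum>q<Q. X c q * W Lb q) = Nb * v c" using Nb_pos by (simp add: v_def)
  have indc: "\<And>A B. ind (A \<and> B) = ind A * ind B" by (simp add: ind_def)
  have indLa: "\<And>x. ind (x = La) = 1 - ind (x = Lb)" by (case_tac x) (simp_all add: ind_def)
  have acc_b: "\<And>c. acc Q t L c Lb = v c"
    unfolding acc_def card_ind indc v_def Nb_def[symmetric] X_def W_def by simp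
  have acc_a: "\<And>c. acc Q t L c La = 1 - u c"
  proof -
    fix c
    have "real (card {q. q < Q \<and> L c q = La \<and> t q = La}) = (\<Sum>q<Q. W La q - X c q * W La q)"
      unfolding card_ind indc by (rule sum.cong) (simp_all add: X_def W_def indLa algebra_simps)
    also have "\<dots> = Na - Na * u c" by (simp add: sum_subtractf sWa su)
    finally show "acc Q t L c La = 1 - u c" unfolding acc_def Na_def[symmetric] using Na_pos
      by (simp add: field_simps)
  qed
  have EI: "\<And>c d l. c \<noteq> d \<Longrightarrow> Gamma2 Q t L c d l = 0" "\<And>l. Gamma3 Q t L l = 0"
    using assms(3) unfolding error_independent_def by auto
  have G2b: "\<And>c d. c \<noteq> d \<Longrightarrow> (\<Sum>q<Q. (X c q - v c)*(X d q - v d)*W Lb q) = 0"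
  proof -
    fix c d :: clf assume "c \<noteq> d"
    from EI(1)[OF this, of Lb] show "(\<Sum>q<Q. (X c q - v c)*(X d q - v d)*W Lb q) = 0"
      unfolding Gamma2_def acc_b Nb_def[symmetric] using Nb_pos by (simp add: X_def W_def)
  qed
  have G2a: "\<And>c d. c \<noteq> d \<Longrightarrow> (\<Sum>q<Q. (X c q - u c)*(X d q - u d)*W La q) = 0"
  proof -
    fix c d :: clf assume "c \<noteq> d"
    from EI(1)[OF this, of La] have "(\<Sum>q<Q. (ind (L c q = La) - (1 - u c))*(ind (L d q = La) - (1 - u d))*W La q) = 0"
      unfolding Gamma2_def acc_a Na_def[symmetric] using Na_pos by (simp add: W_def)
    also have "(\<Sum>q<Q. (ind (L c q = La) - (1 - u c))*(ind (L d q = La) - (1 - u d))*W La q)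
       = (\<Sum>q<Q. (X c q - u c)*(X d q - u d)*W La q)"
      by (rule sum.cong) (simp_all add: indLa X_def algebra_simps)
    finally show "(\<Sum>q<Q. (X c q - u c)*(X d q - u d)*W La q) = 0" .
  qed
  have G3b: "(\<Sum>q<Q. (X Ci q - v Ci)*(X Cj q - v Cj)*(X Ck q - v Ck)*W Lb q) = 0"
    using EI(2)[of Lb] unfolding Gamma3_def acc_b Nb_def[symmetric] using Nb_pos by (simp add: X_def W_def)
  have G3a: "(\<Sum>q<Q. (X Ci q - u Ci)*(X Cj q - u Cj)*(X Ck q - u Ck)*W La q) = 0"
  proof -
    from EI(2)[of La] have "(\<Sum>q<Q. (ind (L Ci q = La) - (1 - u Ci))*(ind (L Cj q = La) - (1 - u Cj))
          *(ind (L Ck q = La) - (1 - u Ck))*W La q) = 0"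
      unfolding Gamma3_def acc_a Na_def[symmetric] using Na_pos by (simp add: W_def)
    also have "(\<Sum>q<Q. (ind (L Ci q = La) - (1 - u Ci))*(ind (L Cj q = La) - (1 - u Cj))
          *(ind (L Ck q = La) - (1 - u Ck))*W La q)
       = - (\<Sum>q<Q. (X Ci q - u Ci)*(X Cj q - u Cj)*(X Ck q - u Ck)*W La q)"
      unfolding sum_negf[symmetric] by (rule sum.cong) (simp_all add: indLa X_def algebra_simps)
    finally show ?thesis by simp
  qed
  have Pa: "\<And>c d. c \<noteq> d \<Longrightarrow> (\<Sum>q<Q. X c q * X d q * W La q) = Na * u c * u d"
    by (rule pair_sum[OF G2a]) (simp_all add: su sWa)
  have Pb: "\<And>c d. c \<noteq> d \<Longrightarrow> (\<Sum>q<Q. X c q * X d q * W Lb q) = Nb * v c * v d"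
    by (rule pair_sum[OF G2b]) (simp_all add: sv sWb)
  have Ta: "(\<Sum>q<Q. X Ci q * X Cj q * X Ck q * W La q) = Na * u Ci * u Cj * u Ck"
    by (rule triple_sum[OF G3a]) (simp_all add: su sWa Pa)
  have Tb: "(\<Sum>q<Q. X Ci q * X Cj q * X Ck q * W Lb q) = Nb * v Ci * v Cj * v Ck"
    by (rule triple_sum[OF G3b]) (simp_all add: sv sWb Pb)
  have fr: "\<And>x y z. freq Q L x y z = (\<Sum>q<Q. ind (L Ci q = x \<and> L Cj q = y \<and> L Ck q = z))/Q"
    by (simp add: freq_def card_ind)
  define p where "p = Na / Q"
  define r where "r = Nb / Q"
  have pr: "p + r = 1" unfolding p_def r_def add_divide_distrib[symmetric] QN[symmetric] using Qpos by simp
  have S1: "\<And>c. (\<Sum>q<Q. X c q) / Q = p * u c + r * v c"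
    unfolding split[of "X _"] su sv p_def r_def by (simp add: add_divide_distrib)
  have S2: "\<And>c d. c \<noteq> d \<Longrightarrow> (\<Sum>q<Q. X c q * X d q) / Q = p * u c * u d + r * v c * v d"
    unfolding split[of "\<lambda>q. X _ q * X _ q"] p_def r_def by (simp add: Pa Pb add_divide_distrib)
  have S3: "(\<Sum>q<Q. X Ci q * X Cj q * X Ck q) / Q = p * u Ci * u Cj * u Ck + r * v Ci * v Cj * v Ck"
    unfolding split[of "\<lambda>q. X Ci q * X Cj q * X Ck q"] p_def r_def by (simp add: Ta Tb add_divide_distrib)
  have fbi: "fbi Q L = (\<Sum>q<Q. X Ci q) / Q"
    unfolding fbi_def fr add_divide_distrib[symmetric] sum.distrib[symmetric]
    by (rule arg_cong[where f="\<lambda>s. s / real Q"], rule sum.cong, simp,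
        case_tac "L Ci x"; case_tac "L Cj x"; case_tac "L Ck x"; simp add: X_def ind_def)
  have fbj: "fbj Q L = (\<Sum>q<Q. X Cj q) / Q"
    unfolding fbj_def fr add_divide_distrib[symmetric] sum.distrib[symmetric]
    by (rule arg_cong[where f="\<lambda>s. s / real Q"], rule sum.cong, simp,
        case_tac "L Ci x"; case_tac "L Cj x"; case_tac "L Ck x"; simp add: X_def ind_def)
  have fbk: "fbk Q L = (\<Sum>q<Q. X Ck q) / Q"
    unfolding fbk_def fr add_divide_distrib[symmetric] sum.distrib[symmetric]
    by (rule arg_cong[where f="\<lambda>s. s / real Q"], rule sum.cong, simp,
        case_tac "L Ci x"; case_tac "L Cj x"; case_tac "L Ck x"; simp add: X_def ind_def)
  have Fij: "freq Q L Lb Lb La + freq Q L Lb Lb Lb = (\<Sum>q<Q. X Ci q * X Cj q) / Q"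
    unfolding fr add_divide_distrib[symmetric] sum.distrib[symmetric]
    by (rule arg_cong[where f="\<lambda>s. s / real Q"], rule sum.cong, simp,
        case_tac "L Ci x"; case_tac "L Cj x"; case_tac "L Ck x"; simp add: X_def ind_def)
  have Fik: "freq Q L Lb La Lb + freq Q L Lb Lb Lb = (\<Sum>q<Q. X Ci q * X Ck q) / Q"
    unfolding fr add_divide_distrib[symmetric] sum.distrib[symmetric]
    by (rule arg_cong[where f="\<lambda>s. s / real Q"], rule sum.cong, simp,
        case_tac "L Ci x"; case_tac "L Cj x"; case_tac "L Ck x"; simp add: X_def ind_def)
  have Fjk: "freq Q L La Lb Lb + freq Q L Lb Lb Lb = (\<Sum>q<Q. X Cj q * X Ck q) / Q"
    unfolding fr add_divide_distrib[symmetric] sum.distrib[symmetric]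
    by (rule arg_cong[where f="\<lambda>s. s / real Q"], rule sum.cong, simp,
        case_tac "L Ci x"; case_tac "L Cj x"; case_tac "L Ck x"; simp add: X_def ind_def)
  have F3: "freq Q L Lb Lb Lb = (\<Sum>q<Q. X Ci q * X Cj q * X Ck q) / Q"
    unfolding fr
    by (rule arg_cong[where f="\<lambda>s. s / real Q"], rule sum.cong, simp,
        case_tac "L Ci x"; case_tac "L Cj x"; case_tac "L Ck x"; simp add: X_def ind_def)
  have key: "gamma Q L = p * r * alpha Q L"
    unfolding gamma_def alpha_def
    apply (rule alg[OF pr, where ui="u Ci" and uj="u Cj" and uk="u Ck" and vi="v Ci" and vj="v Cj" and vk="v Ck"
        and fi="fbi Q L" and fj="fbj Q L" and fk="fbk Q L"])
    using S1 S2 S3 fbi fbj fbk Fij Fik Fjk F3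
    by (auto simp add: Dij_def Dik_def Djk_def Dijk_def)
  have anz: "alpha Q L \<noteq> 0" using assms(4) key by auto
  show ?thesis
  proof (intro allI impI)
    fix z :: complex
    assume "of_real (alpha Q L) * z^2 - of_real (alpha Q L) * z + of_real (gamma Q L) = 0"
    hence "of_real (alpha Q L) * (z^2 - z + of_real p * of_real r) = 0"
      unfolding key by (simp add: algebra_simps)
    hence "z^2 - z + of_real p * of_real r = 0" using anz by simp
    moreover have "(of_real p + of_real r :: complex) = 1" using pr by (simp flip: of_real_add)
    moreover have "(z - of_real p) * (z - of_real r) = z^2 - z * (of_real p + of_real r) + of_real p * of_real r"
      by (simp add: algebra_simps power2_eq_square)
    ultimately have "(z - of_real p) * (z - of_real r) = 0" by simp
    hence "z = of_real p \<or> z = of_real r" by simp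
    moreover have "(of_real p :: complex) \<in> \<rat>" unfolding p_def Na_def
      by (simp add: Rats_divide)
    moreover have "(of_real r :: complex) \<in> \<rat>" unfolding r_def Nb_def
      by (simp add: Rats_divide)
    ultimately show "z \<in> \<rat>" by auto
  qed
qed
end
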